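(* Let $\Pi=\{321,312,123\}$ (consecutive patterns). For $n\ge 2$ let $I_n^{2}(q)=\sum q^{\mathrm{inv}(\pi)}$, the sum over those $\pi\in\mathrm{Av}_n(\Pi)$ with $\pi_{n-1}>\pi_n$ and either $n=2$ or $\pi_{n-2}<\pi_{n-1}$. Then $I_2^{2}(q)=q$, $I_3^{2}(q)=q+q^2$, $$I_n^{2}(q)=(q+q^2+\cdots+q^{n-1})\,I_{n-2}^{2}(q)\quad (n\ge 4),$$ and $I_n(\Pi;q)=I_{n-1}^{2}(q)+I_n^{2}(q)$ for $n\ge 3$. In particular, for $n\ge 4$, $$I_n(\Pi;q)=I_{n-1}^{2}(q)+(q+q^2+\cdots+q^{n-1})\,I_{n-2}^{2}(q).$$
   Context: For $\sigma\in S_3$ and $\pi=\pi_1\cdots\pi_n\in S_n$, $\pi$ contains the consecutive pattern $\sigma$ if there is an index $i$ with $1\le i\le n-2$ such that $\pi_i\pi_{i+1}\pi_{i+2}$ is order-isomorphic to $\sigma$; otherwise $\pi$ avoids $\sigma$. $\mathrm{Av}_n(\Pi)$ is the set of $\pi\in S_n$ avoiding every pattern in $\Pi$. $\mathrm{inv}(\pi)=\#\{(i,j):i<j,\ \pi_i>\pi_j\}$ and $I_n(\Pi;q)=\sum_{\pi\in\mathrm{Av}_n(\Pi)}q^{\mathrm{inv}(\pi)}$. Thus $I_n^{2}$ collects the avoiders whose final maximal decreasing run has length exactly $2$. *)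

theory Defs
  imports "HOL-Combinatorics.Multiset_Permutations" "HOL-Computational_Algebra.Polynomial"
begin

text \<open>Permutations of [n] are lists (one-line notation) in permutations_of_set {1..n};
  list index i (0-based) corresponds to position i+1.\<close>

definition order_iso :: "nat list \<Rightarrow> nat list \<Rightarrow> bool" where
  "order_iso u v \<longleftrightarrow> length u = length v \<and>
     (\<forall>j < length u. \<forall>k < length u. (u ! j < u ! k) = (v ! j < v ! k))"

definition contains_consec :: "nat list \<Rightarrow> nat list \<Rightarrow> bool" where
  "contains_consec p \<sigma> \<longleftrightarrow>
     (\<exists>i. i + 2 < length p \<and> order_iso [p ! i, p ! (i+1), p ! (i+2)] \<sigma>)"

definition Av :: "nat \<Rightarrow> nat list set \<Rightarrow> nat list set" where
  "Av n Pats = {p \<in> permutations_of_set {1..n}. \<forall>\<sigma>\<in>Pats. \<not> contains_consec p \<sigma>}"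

definition inv_count :: "nat list \<Rightarrow> nat" where
  "inv_count p = card {(i, j). i < j \<and> j < length p \<and> p ! i > p ! j}"

definition I_poly :: "nat \<Rightarrow> nat list set \<Rightarrow> int poly" where
  "I_poly n Pats = (\<Sum>p\<in>Av n Pats. monom 1 (inv_count p))"

definition Pi0 :: "nat list set" where
  "Pi0 = {[3,2,1], [3,1,2], [1,2,3]}"

definition I2 :: "nat \<Rightarrow> int poly" where
  "I2 n = (\<Sum>p\<in>{p \<in> Av n Pi0. p ! (n-2) > p ! (n-1) \<and>
                     (n = 2 \<or> p ! (n-3) < p ! (n-2))}. monom 1 (inv_count p))"

end

theory Submission imports Defs begin
lemma ok_iso: "order_iso [a,b,c] [3,2,1] \<longleftrightarrow> b < a \<and> c < b"
  "order_iso [a,b,c] [3,1,2] \<longleftrightarrow> c < a \<and> b < c"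
  "order_iso [a,b,c] [1,2,3] \<longleftrightarrow> a < b \<and> b < c"
  unfolding order_iso_def by (auto simp: less_Suc_eq numeral_3_eq_3 All_less_Suc)

definition ok3 :: "nat \<Rightarrow> nat \<Rightarrow> nat \<Rightarrow> bool" where
  "ok3 a b c \<longleftrightarrow> \<not>(b<a \<and> c<b) \<and> \<not>(c<a \<and> b<c) \<and> \<not>(a<b \<and> b<c)"

lemma avoid_iff: "(\<forall>\<sigma>\<in>Pi0. \<not> contains_consec p \<sigma>) \<longleftrightarrow>
   (\<forall>i. i+2 < length p \<longrightarrow> ok3 (p!i) (p!(i+1)) (p!(i+2)))"
proof -
  have "(\<forall>\<sigma>\<in>Pi0. \<not> contains_consec p \<sigma>) \<longleftrightarrow> (\<forall>i. i+2 < length p \<longrightarrow>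
     \<not> order_iso [p!i, p!(i+1), p!(i+2)] [3,2,1] \<and> \<not> order_iso [p!i, p!(i+1), p!(i+2)] [3,1,2]
     \<and> \<not> order_iso [p!i, p!(i+1), p!(i+2)] [1,2,3])"
    unfolding Pi0_def contains_consec_def by blast
  then show ?thesis by (simp only: ok_iso ok3_def)
qed

definition Q :: "nat list \<Rightarrow> bool" where
  "Q q \<longleftrightarrow> (\<forall>i. i+2 < length q \<longrightarrow> ok3 (q!(i+2)) (q!(i+1)) (q!i))"

lemma Q_rev: "(\<forall>i. i+2 < length p \<longrightarrow> ok3 (p!i) (p!(i+1)) (p!(i+2))) \<longleftrightarrow> Q (rev p)"
proof
  assume H: "\<forall>i. i+2 < length p \<longrightarrow> ok3 (p!i) (p!(i+1)) (p!(i+2))"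
  show "Q (rev p)" unfolding Q_def
  proof (intro allI impI)
    fix i assume i: "i+2 < length (rev p)"
    define d where "d = length p - i - 3"
    have d: "length p = i + 3 + d" using i unfolding d_def by simp
    have b: "d + 2 < length p" using d by simp
    show "ok3 (rev p ! (i + 2)) (rev p ! (i + 1)) (rev p ! i)"
      using H[rule_format, OF b] by (simp add: rev_nth d)
  qed
next
  assume H: "Q (rev p)"
  show "\<forall>i. i+2 < length p \<longrightarrow> ok3 (p!i) (p!(i+1)) (p!(i+2))"
  proof (intro allI impI)
    fix i assume i: "i+2 < length p"
    define d where "d = length p - i - 3"
    have d: "length p = i + 3 + d" using i unfolding d_def by simp
    have b: "d + 2 < length (rev p)" using d by simp
    show "ok3 (p!i) (p!(i+1)) (p!(i+2))"
      using H[unfolded Q_def, rule_format, OF b] by (simp add: rev_nth d)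
  qed
qed

lemma Q_Cons: "Q (x # xs) \<longleftrightarrow> Q xs \<and> (2 \<le> length xs \<longrightarrow> ok3 (xs!1) (xs!0) x)"
proof
  assume H: "Q (x # xs)"
  have "Q xs" unfolding Q_def
  proof (intro allI impI)
    fix i assume "i + 2 < length xs"
    then show "ok3 (xs ! (i + 2)) (xs ! (i + 1)) (xs ! i)"
      using H[unfolded Q_def, rule_format, of "Suc i"] by simp
  qed
  moreover have "2 \<le> length xs \<longrightarrow> ok3 (xs!1) (xs!0) x"
    using H[unfolded Q_def, rule_format, of 0] by (auto simp: numeral_2_eq_2)
  ultimately show "Q xs \<and> (2 \<le> length xs \<longrightarrow> ok3 (xs!1) (xs!0) x)" by blast
next
  assume H: "Q xs \<and> (2 \<le> length xs \<longrightarrow> ok3 (xs!1) (xs!0) x)"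
  show "Q (x # xs)" unfolding Q_def
  proof (intro allI impI)
    fix i assume i: "i + 2 < length (x # xs)"
    show "ok3 ((x # xs) ! (i + 2)) ((x # xs) ! (i + 1)) ((x # xs) ! i)"
    proof (cases i)
      case 0 then show ?thesis using H i by (simp add: numeral_2_eq_2)
    next
      case (Suc k)
      then show ?thesis using H[THEN conjunct1, unfolded Q_def, rule_format, of k] i
        by (simp add: numeral_2_eq_2)
    qed
  qed
qed

lemma Q_map:
  assumes "\<And>x y. x \<in> set xs \<Longrightarrow> y \<in> set xs \<Longrightarrow> (f x < f y) = (x < y)"
  shows "Q (map f xs) = Q xs"
proof -
  have h: "\<And>i j. i < length xs \<Longrightarrow> j < length xs \<Longrightarrow> (f (xs!i) < f (xs!j)) = (xs!i < xs!j)"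
    using assms by simp
  show ?thesis unfolding Q_def ok3_def by (auto simp: h)
qed

fun coinv :: "nat list \<Rightarrow> nat" where
  "coinv [] = 0"
| "coinv (x # xs) = length (filter (\<lambda>y. x < y) xs) + coinv xs"

lemma inv_snoc: "inv_count (xs @ [x]) = inv_count xs + length (filter (\<lambda>y. x < y) xs)"
proof -
  let ?n = "length xs"
  let ?A = "{(i, j). i < j \<and> j < ?n \<and> xs ! i > xs ! j}"
  let ?B = "(\<lambda>i. (i, ?n)) ` {i. i < ?n \<and> x < xs ! i}"
  have e: "{(i, j). i < j \<and> j < length (xs@[x]) \<and> (xs@[x]) ! i > (xs@[x]) ! j} = ?A \<union> ?B"
    by (auto simp: nth_append less_Suc_eq)
  have fA: "finite ?A" by (rule finite_subset[of _ "{..<?n} \<times> {..<?n}"]) auto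
  have fB: "finite ?B" by simp
  have d: "?A \<inter> ?B = {}" by auto
  have cB: "card ?B = length (filter (\<lambda>y. x < y) xs)"
    by (subst card_image) (auto simp: inj_on_def length_filter_conv_card)
  show ?thesis unfolding inv_count_def e using card_Un_disjoint[OF fA fB d] cB by simp
qed

lemma inv_rev: "inv_count (rev q) = coinv q"
proof (induction q)
  case Nil then show ?case by (simp add: inv_count_def)
next
  case (Cons x q)
  then show ?case by (simp add: inv_snoc rev_filter[symmetric])
qed

lemma inv_coinv: "inv_count p = coinv (rev p)"
  using inv_rev[of "rev p"] by simp

lemma coinv_map:
  assumes "\<And>x y. (f x < f y) = (x < y)"
  shows "coinv (map f xs) = coinv xs"
  by (induction xs) (auto simp: filter_map comp_def assms)

definition A :: "nat \<Rightarrow> nat list set" where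
  "A n = {q. distinct q \<and> set q = {1..n} \<and> Q q}"

definition B :: "nat \<Rightarrow> nat list set" where
  "B n = {q \<in> A n. q!0 < q!1}"

lemma A_len: "q \<in> A n \<Longrightarrow> length q = n"
  unfolding A_def using distinct_card by fastforce

lemma finite_A: "finite (A n)"
proof (rule finite_subset[of _ "permutations_of_set {1..n}"])
  show "A n \<subseteq> permutations_of_set {1..n}" by (auto simp: A_def permutations_of_set_def)
qed simp

lemma finite_B: "finite (B n)"
  using finite_A unfolding B_def by simp

lemma rev_image_iff: "x \<in> rev ` S \<longleftrightarrow> rev x \<in> S"
proof
  assume "x \<in> rev ` S" then obtain y where "y \<in> S" "x = rev y" by blast
  then show "rev x \<in> S" by simp
next
  assume "rev x \<in> S" then have "rev (rev x) \<in> rev ` S" by (rule imageI)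
  then show "x \<in> rev ` S" by simp
qed

lemma Av_eq: "{p \<in> Av n Pi0. C p} = rev ` {q \<in> A n. C (rev q)}"
proof -
  have "p \<in> Av n Pi0 \<longleftrightarrow> rev p \<in> A n" for p
    unfolding Av_def A_def permutations_of_set_def by (simp add: avoid_iff Q_rev[symmetric] conj_commute)
  then show ?thesis by (intro set_eqI) (simp add: rev_image_iff)
qed

lemma Ipoly_eq: "I_poly n Pi0 = (\<Sum>q\<in>A n. monom 1 (coinv q))"
proof -
  have "Av n Pi0 = rev ` A n" using Av_eq[of n "\<lambda>_. True"] by simp
  then show ?thesis unfolding I_poly_def
    by (simp add: sum.reindex inv_rev)
qed

lemma A_desc: "q \<in> A n \<Longrightarrow> 3 \<le> n \<Longrightarrow> q!0 < q!1 \<Longrightarrow> q!2 < q!1"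
proof -
  assume q: "q \<in> A n" "3 \<le> n" "q!0 < q!1"
  have QQ: "Q q" and d: "distinct q" using q(1) unfolding A_def by auto
  have l: "length q = n" using A_len[OF q(1)] .
  have "0 + 2 < length q" using l q(2) by simp
  then have "ok3 (q!(0+2)) (q!(0+1)) (q!0)" using QQ unfolding Q_def by blast
  then have o: "ok3 (q!2) (q!1) (q!0)" by (simp add: numeral_2_eq_2)
  have "q!2 \<noteq> q!1" using d l q(2) by (simp add: nth_eq_iff_index_eq)
  then show ?thesis using o q(3) unfolding ok3_def by auto
qed
lemma I2_eq: "2 \<le> n \<Longrightarrow> I2 n = (\<Sum>q\<in>B n. monom 1 (coinv q))"
proof -
  assume n: "2 \<le> n"
  have "{q \<in> A n. (rev q) ! (n-2) > (rev q) ! (n-1) \<and> (n = 2 \<or> (rev q) ! (n-3) < (rev q) ! (n-2))} = B n"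
  proof -
    have "(rev q) ! (n-2) > (rev q) ! (n-1) \<and> (n = 2 \<or> (rev q) ! (n-3) < (rev q) ! (n-2))
       \<longleftrightarrow> q!0 < q!1" if q: "q \<in> A n" for q
    proof -
      have l: "length q = n" using q A_len by blast
      have e: "rev q ! (n-2) = q!1" "rev q ! (n-1) = q!0" using l n by (simp_all add: rev_nth)
      have e3: "n \<noteq> 2 \<Longrightarrow> rev q ! (n-3) = q!2" using l n by (simp add: rev_nth)
      show ?thesis
      proof (cases "n = 2")
        case True then show ?thesis using e by simp
      next
        case False then have "3 \<le> n" using n by simp
        then show ?thesis using A_desc[OF q] e e3 False by auto
      qed
    qed
    then show ?thesis unfolding B_def by auto
  qed
  then show ?thesis unfolding I2_def Av_eq
    by (simp add: sum.reindex inv_rev)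
qed

lemma pos_n:
  assumes q: "q \<in> A n" and n: "3 \<le> n"
  shows "q!0 = n \<or> q!1 = n"
proof (rule ccontr)
  assume c: "\<not> (q!0 = n \<or> q!1 = n)"
  have l: "length q = n" and d: "distinct q" and s: "set q = {1..n}" and QQ: "Q q"
    using q A_len by (auto simp: A_def)
  have "n \<in> set q" using s n by simp
  then obtain k where k: "k < n" "q!k = n" using l by (metis in_set_conv_nth)
  have "k \<noteq> 0"
  proof assume "k = 0" then have "q!0 = n" using k(2) by simp then show False using c by simp qed
  moreover have "k \<noteq> 1"
  proof assume "k = 1" then have "q!1 = n" using k(2) by simp then show False using c by simp qed
  ultimately have k2: "2 \<le> k" by arith
  then obtain i where i: "k = i + 2" using le_Suc_ex by (metis add.commute)
  have "i + 2 < length q" using k i l by simp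
  then have "ok3 (q!(i+2)) (q!(i+1)) (q!i)" using QQ unfolding Q_def by blast
  moreover have "q!(i+1) \<le> n" "q!i \<le> n"
  proof -
    have all: "\<forall>x\<in>set q. x \<le> n" using s by auto
    show "q!(i+1) \<le> n" using all nth_mem[of "i+1" q] l k i by simp
    show "q!i \<le> n" using all nth_mem[of "i" q] l k i by simp
  qed
  moreover have "q!(i+1) \<noteq> q!k" "q!i \<noteq> q!k" "q!(i+1) \<noteq> q!i"
    using d l k(1) i by (simp_all add: nth_eq_iff_index_eq)
  moreover note k(2)
  ultimately show False unfolding ok3_def using k i by auto
qed

lemma A_elem: "q \<in> A m \<Longrightarrow> i < m \<Longrightarrow> 1 \<le> q!i \<and> q!i \<le> m"
proof -
  assume q: "q \<in> A m" and i: "i < m"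
  have "q!i \<in> set q" using i A_len[OF q] by simp
  then show ?thesis using q unfolding A_def by auto
qed

lemma A_set: "q \<in> A m \<Longrightarrow> set q = {1..m}" and A_dist: "q \<in> A m \<Longrightarrow> distinct q"
  and A_Q: "q \<in> A m \<Longrightarrow> Q q"
  unfolding A_def by auto

lemma ins_top: "1 \<le> n \<Longrightarrow> insert n {1..n-1} = {1..(n::nat)}" by auto

lemma Cons_in_A:
  assumes q: "q \<in> B (n-1)" and n: "3 \<le> n"
  shows "n # q \<in> A n" "n # q \<notin> B n"
proof -
  have qa: "q \<in> A (n-1)" and lt: "q!0 < q!1" using q unfolding B_def by auto
  have l: "length q = n - 1" using A_len[OF qa] .
  have b1: "q!1 \<le> n - 1" "q!0 \<le> n - 1" using A_elem[OF qa, of 1] A_elem[OF qa, of 0] n by auto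
  have "distinct (n # q)" using A_dist[OF qa] A_set[OF qa] by auto
  moreover have "set (n # q) = {1..n}" using A_set[OF qa] ins_top n by simp
  moreover have "Q (n # q)" unfolding Q_Cons using A_Q[OF qa] b1 lt n l unfolding ok3_def by auto
  ultimately show "n # q \<in> A n" unfolding A_def by blast
  show "n # q \<notin> B n" using b1 n unfolding B_def by auto
qed

lemma A_split:
  assumes n: "3 \<le> n"
  shows "A n = B n \<union> (Cons n) ` B (n-1)"
proof
  show "B n \<union> (Cons n) ` B (n-1) \<subseteq> A n" using Cons_in_A[OF _ n] unfolding B_def by auto
next
  show "A n \<subseteq> B n \<union> (Cons n) ` B (n-1)"
  proof
    fix q assume q: "q \<in> A n"
    show "q \<in> B n \<union> (Cons n) ` B (n-1)"
    proof (cases "q!0 < q!1")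
      case True then show ?thesis using q unfolding B_def by auto
    next
      case False
      have l: "length q = n" using A_len[OF q] .
      have d: "distinct q" using A_dist[OF q] .
      have ne: "q!0 \<noteq> q!1" using d l n by (simp add: nth_eq_iff_index_eq)
      have b0: "q!0 \<le> n" "q!1 \<le> n" using A_elem[OF q, of 0] A_elem[OF q, of 1] n by auto
      have q0: "q!0 = n" using pos_n[OF q n] False ne b0 by auto
      obtain x r where xr: "q = x # r" using l n by (cases q) auto
      have x: "x = n" using q0 xr by simp
      have lr: "length r = n - 1" using l xr by simp
      have dr: "distinct r" "n \<notin> set r" using d xr x by auto
      have sr: "set r = {1..n-1}"
      proof -
        have h: "insert n (set r) = {1..n}" using A_set[OF q] xr x by simp
        have "set r = insert n (set r) - {n}" using dr(2) by auto
        also have "\<dots> = {1..n} - {n}" using h by simp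
        also have "\<dots> = {1..n-1}" by auto
        finally show ?thesis .
      qed
      have Qnr: "Q (n # r)" using A_Q[OF q] xr x by simp
      then have Qr: "Q r" and ok: "ok3 (r!1) (r!0) n" using lr n unfolding Q_Cons by auto
      have ner: "r!0 \<noteq> r!1" using dr lr n by (simp add: nth_eq_iff_index_eq)
      have "r!0 \<in> set r" using lr n by simp
      then have r0: "r!0 \<le> n - 1" using sr by auto
      have "r!0 < r!1" using ok ner r0 n unfolding ok3_def by auto
      then have "r \<in> B (n-1)" unfolding B_def A_def using dr sr Qr by auto
      then show ?thesis using xr x by auto
    qed
  qed
qed

lemma coinv_top: "q \<in> B (n-1) \<Longrightarrow> 1 \<le> n \<Longrightarrow> coinv (n # q) = coinv q"
proof -
  assume q: "q \<in> B (n-1)" and n: "1 \<le> n"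
  have "\<forall>y\<in>set q. y \<le> n - 1" using q unfolding B_def A_def by auto
  then have "filter (\<lambda>y. n < y) q = []" using n by (auto simp: filter_empty_conv)
  then show ?thesis by simp
qed

lemma Ipoly_rec: "3 \<le> n \<Longrightarrow> I_poly n Pi0 = I2 (n-1) + I2 n"
proof -
  assume n: "3 \<le> n"
  have disj: "B n \<inter> (Cons n) ` B (n-1) = {}" using Cons_in_A(2)[OF _ n] by auto
  have "I_poly n Pi0 = (\<Sum>q\<in>B n. monom 1 (coinv q)) + (\<Sum>q\<in>(Cons n) ` B (n-1). monom 1 (coinv q))"
    unfolding Ipoly_eq A_split[OF n]
    by (rule sum.union_disjoint) (use finite_B disj in auto)
  also have "(\<Sum>q\<in>(Cons n) ` B (n-1). monom 1 (coinv q)) = (\<Sum>q\<in>B (n-1). monom 1 (coinv (n # q)))"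
    by (simp add: sum.reindex)
  also have "\<dots> = (\<Sum>q\<in>B (n-1). monom 1 (coinv q))"
    using coinv_top n by (intro sum.cong) auto
  finally show ?thesis using I2_eq[of n] I2_eq[of "n-1"] n by simp
qed

definition gj :: "nat \<Rightarrow> nat \<Rightarrow> nat" where "gj j x = (if x < j then x else Suc x)"
definition fj :: "nat \<Rightarrow> nat \<Rightarrow> nat" where "fj j x = (if x < j then x else x - 1)"

lemma gj_mono: "(gj j x < gj j y) = (x < y)" by (auto simp: gj_def)
lemma inj_gj: "inj (gj j)" by (auto simp: inj_def gj_def split: if_splits)
lemma Q_map_gj: "Q (map (gj j) xs) = Q xs" by (rule Q_map) (rule gj_mono)

lemma gf: "x \<noteq> j \<Longrightarrow> gj j (fj j x) = x" by (auto simp: gj_def fj_def)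

lemma gj_image: "1 \<le> j \<Longrightarrow> j \<le> n - 1 \<Longrightarrow> gj j ` {1..n-2} = {1..n-1} - {j}"
proof
  assume j: "1 \<le> j" "j \<le> n - 1"
  show "gj j ` {1..n-2} \<subseteq> {1..n-1} - {j}" using j by (auto simp: gj_def)
  show "{1..n-1} - {j} \<subseteq> gj j ` {1..n-2}"
  proof
    fix y assume y: "y \<in> {1..n-1} - {j}"
    show "y \<in> gj j ` {1..n-2}"
    proof (cases "y < j")
      case True
      then have "y = gj j y" by (simp add: gj_def)
      moreover have "y \<in> {1..n-2}" using y True j by auto
      ultimately show ?thesis by blast
    next
      case False
      then have "y > j" using y by auto
      then have "y = gj j (y - 1)" by (auto simp: gj_def)
      moreover have "y - 1 \<in> {1..n-2}" using y \<open>y > j\<close> j by auto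
      ultimately show ?thesis by blast
    qed
  qed
qed

lemma Phi_in:
  assumes n: "4 \<le> n" and r: "r \<in> B (n-2)" and j: "j \<in> {1..n-1}"
  shows "j # n # map (gj j) r \<in> B n"
proof -
  let ?s = "map (gj j) r"
  have ra: "r \<in> A (n-2)" and lt: "r!0 < r!1" using r unfolding B_def by auto
  have lr: "length r = n - 2" using A_len[OF ra] .
  have ss: "set ?s = {1..n-1} - {j}" using A_set[OF ra] gj_image[of j n] j by simp
  have ds: "distinct ?s" using A_dist[OF ra] inj_gj by (simp add: distinct_map inj_on_def inj_def)
  have Qs: "Q ?s" using A_Q[OF ra] Q_map[of r "gj j"] gj_mono by simp
  have s0: "?s!0 < ?s!1" using lt lr n gj_mono by simp
  have "?s!1 \<in> set ?s" "?s!0 \<in> set ?s" using lr n by simp_all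
  then have s1n: "?s!1 < n" "?s!0 < n" using ss n by auto
  have "distinct (j # n # ?s)" using ds ss j by auto
  moreover have "set (j # n # ?s) = {1..n}" using ss j n by auto
  moreover have "Q (j # n # ?s)"
  proof -
    have "Q (n # ?s)" unfolding Q_Cons using Qs s0 s1n unfolding ok3_def by auto
    then show ?thesis unfolding Q_Cons[of j] using s1n j unfolding ok3_def by auto
  qed
  ultimately have "j # n # ?s \<in> A n" unfolding A_def by blast
  then show ?thesis unfolding B_def using j n by auto
qed

lemma Phi_surj:
  assumes n: "4 \<le> n" and q: "q \<in> B n"
  shows "\<exists>r j. r \<in> B (n-2) \<and> j \<in> {1..n-1} \<and> q = j # n # map (gj j) r"
proof -
  have qa: "q \<in> A n" and lt: "q!0 < q!1" using q unfolding B_def by auto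
  have l: "length q = n" using A_len[OF qa] .
  have b1: "q!1 \<le> n" using A_elem[OF qa, of 1] n by auto
  have n3: "3 \<le> n" using n by simp
  have "q!0 \<noteq> n" using lt b1 by linarith
  then have q1: "q!1 = n" using pos_n[OF qa n3] by blast
  obtain j q' where q2: "q = j # q'" using l n by (cases q) auto
  obtain m t where "q' = m # t" using l n q2 by (cases q') auto
  then have q3: "q = j # m # t" using q2 by simp
  have m: "m = n" using q1 q3 by simp
  have lt': "length t = n - 2" using l q3 by simp
  have d: "distinct (j # n # t)" using A_dist[OF qa] q3 m by simp
  have sq: "set (j # n # t) = {1..n}" using A_set[OF qa] q3 m by simp
  have "j \<in> {1..n}" using sq by (metis list.set_intros(1))
  moreover have "j \<noteq> n" using d by auto
  ultimately have jr: "j \<in> {1..n-1}" by auto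
  have st: "set t = {1..n-1} - {j}"
  proof -
    have "set t = set (j # n # t) - {j, n}" using d by auto
    also have "\<dots> = {1..n} - {j, n}" using sq by simp
    also have "\<dots> = {1..n-1} - {j}" using n by (auto simp del: atLeastAtMost_iff) (auto simp: atLeastAtMost_iff)
    finally show ?thesis .
  qed
  define r where "r = map (fj j) t"
  have jt: "j \<notin> set t" using d by simp
  have "map (gj j \<circ> fj j) t = t" by (rule map_idI) (metis comp_apply gf jt)
  then have tr: "t = map (gj j) r" unfolding r_def map_map by simp
  have dr: "distinct r" using d tr by (simp add: distinct_map)
  have "gj j ` set r = gj j ` {1..n-2}" using tr st gj_image[of j n] jr by simp
  then have sr: "set r = {1..n-2}" using inj_gj by (simp add: inj_image_eq_iff)
  have QT: "Q (j # n # t)" using A_Q[OF qa] q3 m by simp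
  then have Qt: "Q t" and ok: "ok3 (t!1) (t!0) n" using lt' n unfolding Q_Cons by auto
  have Qr: "Q r" using Qt tr Q_map_gj by metis
  have net: "t!0 \<noteq> t!1" using d lt' n by (simp add: nth_eq_iff_index_eq)
  have "t!0 \<in> set t" using lt' n by simp
  then have "t!0 \<in> {1..n-1} - {j}" using st by simp
  then have "t!0 \<le> n - 1" by simp
  then have t0: "t!0 < n" using n by linarith
  have "t!0 < t!1" using ok net t0 unfolding ok3_def by auto
  moreover have lr: "length r = n - 2" using lt' by (simp add: r_def)
  moreover have "t!0 = gj j (r!0)" "t!1 = gj j (r!1)" using lr n by (simp_all add: tr)
  ultimately have "r!0 < r!1" using gj_mono by metis
  then have "r \<in> B (n-2)" unfolding B_def A_def using dr sr Qr by auto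
  then show ?thesis using jr q3 m tr by blast
qed

lemma coinv_Phi:
  assumes n: "4 \<le> n" and r: "r \<in> B (n-2)" and j: "j \<in> {1..n-1}"
  shows "coinv (j # n # map (gj j) r) = coinv r + (n - j)"
proof -
  have ra: "r \<in> A (n-2)" using r unfolding B_def by auto
  have sr: "set r = {1..n-2}" and dr: "distinct r" using A_set[OF ra] A_dist[OF ra] by auto
  have ss: "set (map (gj j) r) = {1..n-1} - {j}" using sr gj_image[of j n] j by simp
  have f1: "filter (\<lambda>y. n < y) (map (gj j) r) = []"
  proof -
    have "\<forall>y\<in>set (map (gj j) r). \<not> n < y" using ss by auto
    then show ?thesis by (simp add: filter_empty_conv)
  qed
  have "length (filter (\<lambda>y. j < y) (map (gj j) r)) = length (filter (\<lambda>x. j < gj j x) r)"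
    by (simp add: filter_map comp_def)
  also have "\<dots> = card ({x. j < gj j x} \<inter> set r)" using dr by (rule distinct_length_filter)
  also have "{x. j < gj j x} \<inter> set r = {j..n-2}" using sr j by (auto simp: gj_def)
  also have "card {j..n-2} = n - 1 - j" using n by simp
  finally have f2: "length (filter (\<lambda>y. j < y) (map (gj j) r)) = n - 1 - j" .
  have jn: "j < n" using j n by auto
  have c: "coinv (map (gj j) r) = coinv r" by (rule coinv_map) (rule gj_mono)
  show ?thesis using f1 f2 jn c j by simp
qed

lemma B_image:
  assumes n: "4 \<le> n"
  shows "B n = (\<lambda>(r, j). j # n # map (gj j) r) ` (B (n-2) \<times> {1..n-1})"
proof
  show "(\<lambda>(r, j). j # n # map (gj j) r) ` (B (n-2) \<times> {1..n-1}) \<subseteq> B n"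
    using Phi_in[OF n] by auto
  show "B n \<subseteq> (\<lambda>(r, j). j # n # map (gj j) r) ` (B (n-2) \<times> {1..n-1})"
  proof
    fix q assume "q \<in> B n"
    then obtain r j where "r \<in> B (n-2)" "j \<in> {1..n-1}" "q = j # n # map (gj j) r"
      using Phi_surj[OF n] by blast
    then show "q \<in> (\<lambda>(r, j). j # n # map (gj j) r) ` (B (n-2) \<times> {1..n-1})"
      by (auto intro!: image_eqI[where x="(r, j)"])
  qed
qed

lemma inj_Phi: "inj_on (\<lambda>(r, j). j # n # map (gj j) r) X"
proof (rule inj_onI)
  fix x y assume e: "(\<lambda>(r, j). j # n # map (gj j) r) x = (\<lambda>(r, j). j # n # map (gj j) r) y"
  obtain r j where x: "x = (r, j)" by (cases x)
  obtain r' j' where y: "y = (r', j')" by (cases y)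
  have jj: "j = j'" and "map (gj j) r = map (gj j) r'" using e x y by auto
  then have "r = r'" using inj_map_eq_map[OF inj_gj] by blast
  then show "x = y" using x y jj by simp
qed

lemma I2_rec:
  assumes n: "4 \<le> n"
  shows "I2 n = (\<Sum>k=1..n-1. monom 1 k) * I2 (n-2)"
proof -
  have "I2 n = (\<Sum>q\<in>B n. monom 1 (coinv q))" using I2_eq n by simp
  also have "\<dots> = (\<Sum>x\<in>B (n-2) \<times> {1..n-1}. monom 1 (coinv ((\<lambda>(r, j). j # n # map (gj j) r) x)))"
    unfolding B_image[OF n] by (simp only: sum.reindex[OF inj_Phi] comp_def)
  also have "\<dots> = (\<Sum>x\<in>B (n-2) \<times> {1..n-1}. monom 1 (coinv (fst x)) * monom 1 (n - snd x))"
  proof (rule sum.cong[OF refl])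
    fix x assume x: "x \<in> B (n-2) \<times> {1..n-1}"
    obtain r j where xr: "x = (r, j)" by (cases x)
    have c: "coinv (j # n # map (gj j) r) = coinv r + (n - j)" using coinv_Phi[OF n] x xr by blast
    show "(monom 1 (coinv ((\<lambda>(r, j). j # n # map (gj j) r) x)) :: int poly) = monom 1 (coinv (fst x)) * monom 1 (n - snd x)"
      unfolding xr prod.case fst_conv snd_conv mult_monom c by simp
  qed
  also have "\<dots> = (\<Sum>r\<in>B (n-2). monom 1 (coinv r)) * (\<Sum>j=1..n-1. monom 1 (n - j))"
    by (simp add: sum_product sum.cartesian_product case_prod_beta)
  also have "(\<Sum>j=1..n-1. monom 1 (n - j)) = (\<Sum>k=1..n-1. (monom 1 k :: int poly))"
  proof -
    have "(\<Sum>k=1..n-1. (monom 1 k :: int poly)) = (\<Sum>i=1..n-1. monom 1 (n - 1 + 1 - i))"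
      by (rule sum.atLeastAtMost_rev)
    also have "\<dots> = (\<Sum>j=1..n-1. monom 1 (n - j))" using n by simp
    finally show ?thesis by simp
  qed
  also have "(\<Sum>r\<in>B (n-2). monom 1 (coinv r)) = I2 (n-2)" using I2_eq[of "n-2"] n by simp
  finally show ?thesis by (simp add: mult.commute)
qed

lemma p2: "permutations_of_set {1..2::nat} = {[1,2],[2,1]}"
proof -
  have "{1..2::nat} = {1,2}" by auto
  then show ?thesis by (simp add: permutations_of_set_doubleton)
qed

lemma p3: "permutations_of_set {1..3::nat} = {[1,2,3],[1,3,2],[2,1,3],[2,3,1],[3,1,2],[3,2,1]}"
proof -
  have e: "{1..3::nat} = {1,2,3}" by auto
  have d: "{1,2,3::nat} - {1} = {2,3}" "{1,2,3::nat} - {2} = {1,3}" "{1,2,3::nat} - {3} = {1,2}" by auto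
  show ?thesis unfolding e
    apply (subst permutations_of_set_nonempty, simp)
    apply (simp only: d UN_insert UN_empty permutations_of_set_doubleton)
    by auto
qed

lemma I2_2: "I2 2 = monom 1 1"
proof -
  have "{p \<in> Av 2 Pi0. p ! (2-2) > p ! (2-1) \<and> (2 = (2::nat) \<or> p ! (2-3) < p ! (2-2))} = {[2,1]}"
    unfolding Av_def p2 contains_consec_def by auto
  then show ?thesis unfolding I2_def by (simp add: inv_coinv)
qed

lemma I2_3: "I2 3 = monom 1 1 + monom 1 2"
proof -
  have "{p \<in> Av 3 Pi0. p ! (3-2) > p ! (3-1) \<and> (3 = (2::nat) \<or> p ! (3-3) < p ! (3-2))} = {[1,3,2],[2,3,1]}"
    unfolding Av_def p3 by (auto simp: avoid_iff ok3_def)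
  then show ?thesis unfolding I2_def by (simp add: inv_coinv numeral_2_eq_2)
qed

theorem mainTheorem12:
  shows "I2 2 = monom 1 1
    \<and> I2 3 = monom 1 1 + monom 1 2
    \<and> (\<forall>n\<ge>4. I2 n = (\<Sum>k=1..n-1. monom 1 k) * I2 (n-2))
    \<and> (\<forall>n\<ge>3. I_poly n Pi0 = I2 (n-1) + I2 n)
    \<and> (\<forall>n\<ge>4. I_poly n Pi0 = I2 (n-1) + (\<Sum>k=1..n-1. monom 1 k) * I2 (n-2))"
  using I2_2 I2_3 I2_rec Ipoly_rec by simp
end
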